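(* Let $q \geq 5$ be a prime power and let $\mathcal{X}$ be a plane curve of degree $q-1$ defined over $\mathbb{F}_q$ without $\mathbb{F}_q$-linear components with $\mathrm{N}_q(\mathcal{X}) = (q-1)^2$. If there are two distinct $\mathbb{F}_q$-lines $l^1_\infty, l^2_\infty$ with $(l^1_\infty \cup l^2_\infty)(\mathbb{F}_q) \subseteq Z(\mathcal{X})$, then $a_0 = 3$.
   Context: $\mathcal{X}(\mathbb{F}_q)=\mathcal{X}\cap\mathbb{P}^2(\mathbb{F}_q)$, $\mathrm{N}_q(\mathcal{X})=\#\mathcal{X}(\mathbb{F}_q)$; "without $\mathbb{F}_q$-linear components" means no line defined over $\mathbb{F}_q$ is a component. $Z(\mathcal{X}) := \mathbb{P}^2(\mathbb{F}_q)\setminus\mathcal{X}(\mathbb{F}_q)$. $a_0$ is the number of $\mathbb{F}_q$-lines containing no point of $\mathcal{X}(\mathbb{F}_q)$. *)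

theory Defs
  imports Main
begin

text \<open>A ternary form over a field 'a is given by its coefficient function:
  F (i,j,k) is the coefficient of the monomial X^i Y^j Z^k.\<close>

type_synonym 'a form3 = "nat \<times> nat \<times> nat \<Rightarrow> 'a"

definition hom_form :: "nat \<Rightarrow> 'a::zero form3 \<Rightarrow> bool" where
  "hom_form d F \<longleftrightarrow> (\<forall>i j k. F (i,j,k) \<noteq> 0 \<longrightarrow> i + j + k = d) \<and> (\<exists>m. F m \<noteq> 0)"

definition eval_form :: "nat \<Rightarrow> 'a::comm_ring_1 form3 \<Rightarrow> 'a \<times> 'a \<times> 'a \<Rightarrow> 'a" where
  "eval_form d F v = (case v of (x,y,z) \<Rightarrow>
     (\<Sum>i\<le>d. \<Sum>j\<le>d. \<Sum>k\<le>d. F (i,j,k) * x ^ i * y ^ j * z ^ k))"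

text \<open>Product of the linear form aX+bY+cZ with a form G.\<close>
definition lin_mult :: "'a \<times> 'a \<times> 'a \<Rightarrow> 'a::comm_ring_1 form3 \<Rightarrow> 'a form3" where
  "lin_mult l G = (\<lambda>(i,j,k). case l of (a,b,c) \<Rightarrow>
      (if i > 0 then a * G (i - 1, j, k) else 0)
    + (if j > 0 then b * G (i, j - 1, k) else 0)
    + (if k > 0 then c * G (i, j, k - 1) else 0))"

definition has_linear_component :: "nat \<Rightarrow> 'a::comm_ring_1 form3 \<Rightarrow> bool" where
  "has_linear_component d F \<longleftrightarrow>
     (\<exists>l G. l \<noteq> (0,0,0) \<and> hom_form (d - 1) G \<and> F = lin_mult l G)"

definition proj_class :: "'a::field \<times> 'a \<times> 'a \<Rightarrow> ('a \<times> 'a \<times> 'a) set" where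
  "proj_class v = (case v of (x,y,z) \<Rightarrow> {(t*x, t*y, t*z) | t. t \<noteq> 0})"

definition P2 :: "('a::field \<times> 'a \<times> 'a) set set" where
  "P2 = {proj_class v | v. v \<noteq> (0,0,0)}"

definition curve_points :: "nat \<Rightarrow> 'a::field form3 \<Rightarrow> ('a \<times> 'a \<times> 'a) set set" where
  "curve_points d F = {P \<in> P2. \<forall>v\<in>P. eval_form d F v = 0}"

definition Nq :: "nat \<Rightarrow> 'a::field form3 \<Rightarrow> nat" where
  "Nq d F = card (curve_points d F)"

definition Zset :: "nat \<Rightarrow> 'a::field form3 \<Rightarrow> ('a \<times> 'a \<times> 'a) set set" where
  "Zset d F = P2 - curve_points d F"

definition line_points :: "'a::field \<times> 'a \<times> 'a \<Rightarrow> ('a \<times> 'a \<times> 'a) set set" where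
  "line_points l = {P \<in> P2. \<forall>v\<in>P. (case l of (a,b,c) \<Rightarrow> case v of (x,y,z) \<Rightarrow>
      a*x + b*y + c*z = 0)}"

definition Fq_lines :: "('a::field \<times> 'a \<times> 'a) set set set" where
  "Fq_lines = {line_points l | l. l \<noteq> (0,0,0)}"

definition a0 :: "nat \<Rightarrow> 'a::field form3 \<Rightarrow> nat" where
  "a0 d F = card {L \<in> Fq_lines. L \<inter> curve_points d F = {}}"

end

theory Submission
  imports Defs "HOL-Computational_Algebra.Polynomial"
begin


definition sb :: "'a::zero poly \<Rightarrow> nat \<Rightarrow> 'a" where
  "sb p m = (if m = 0 then 0 else coeff p (m - 1))"

lemma coeff_mult_top:
  fixes p q :: "'a::comm_semiring_0 poly"
  assumes "degree p \<le> m" "degree q \<le> n"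
  shows "coeff (p * q) (m + n) = coeff p m * coeff q n"
proof -
  have "coeff (p * q) (m + n) = (\<Sum>i\<le>m+n. coeff p i * coeff q (m+n-i))" by (rule coeff_mult)
  also have "\<dots> = (\<Sum>i\<in>{m}. coeff p i * coeff q (m+n-i))"
  proof (rule sum.mono_neutral_right)
    show "\<forall>i\<in>{..m+n} - {m}. coeff p i * coeff q (m+n-i) = 0"
    proof
      fix i assume "i \<in> {..m+n} - {m}"
      then have "i > m \<or> m+n-i > n" by auto
      then show "coeff p i * coeff q (m+n-i) = 0"
        using assms by (auto simp: coeff_eq_0)
    qed
  qed auto
  finally show ?thesis by simp
qed

lemma sb_mult:
  fixes p q :: "'a::comm_semiring_0 poly"
  assumes "degree p \<le> m" "degree q \<le> n"
  shows "sb (p * q) (m + n) = sb p m * coeff q n + coeff p m * sb q n"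
proof (cases "m = 0")
  case True
  then have "degree p = 0" using assms by simp
  then obtain c where p: "p = [:c:]" by (metis degree_eq_zeroE)
  show ?thesis using True by (simp add: p sb_def)
next
  case m: False
  show ?thesis
  proof (cases "n = 0")
    case True
    then have "degree q = 0" using assms by simp
    then obtain c where q: "q = [:c:]" by (metis degree_eq_zeroE)
    show ?thesis using True m by (simp add: q sb_def mult.commute)
  next
    case n: False
    have "coeff (p * q) (m + n - 1) = (\<Sum>i\<le>m+n-1. coeff p i * coeff q (m+n-1-i))" by (rule coeff_mult)
    also have "\<dots> = (\<Sum>i\<in>{m-1, m}. coeff p i * coeff q (m+n-1-i))"
    proof (rule sum.mono_neutral_right)
      show "\<forall>i\<in>{..m+n-1} - {m-1,m}. coeff p i * coeff q (m+n-1-i) = 0"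
      proof
        fix i assume "i \<in> {..m+n-1} - {m-1,m}"
        then have "i > m \<or> m+n-1-i > n" using m n by auto
        then show "coeff p i * coeff q (m+n-1-i) = 0"
          using assms by (auto simp: coeff_eq_0)
      qed
    qed (use m n in auto)
    also have "\<dots> = coeff p (m-1) * coeff q n + coeff p m * coeff q (n-1)"
      using m n by (simp add: Suc_diff_Suc)
    finally show ?thesis using m n by (simp add: sb_def)
  qed
qed

lemma lin_pow:
  fixes a b :: "'a::comm_semiring_1"
  shows "degree ([:a,b:]^n) \<le> n \<and> coeff ([:a,b:]^n) n = b^n \<and> sb ([:a,b:]^n) n = of_nat n * a * b^(n-1)"
proof (induction n)
  case 0
  then show ?case by (simp add: sb_def)
next
  case (Suc n)
  have d1: "degree [:a,b:] \<le> 1" by simp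
  have e: "[:a,b:]^Suc n = [:a,b:] * [:a,b:]^n" by simp
  have dg: "degree ([:a,b:]^Suc n) \<le> Suc n"
    using degree_power_le[of "[:a,b:]" "Suc n"] d1
    by (metis dual_order.trans mult.commute mult_le_mono2 nat_mult_1_right)
  have c: "coeff ([:a,b:]^Suc n) (1 + n) = b * b^n"
    unfolding e using coeff_mult_top[OF d1, of "[:a,b:]^n" n] Suc by simp
  have s: "sb ([:a,b:]^Suc n) (1 + n) = a * b^n + b * (of_nat n * a * b^(n-1))"
    unfolding e using sb_mult[OF d1, of "[:a,b:]^n" n] Suc by (simp add: sb_def)
  have "b * (of_nat n * a * b^(n-1)) = of_nat n * a * b^n"
    by (cases n) (simp_all add: algebra_simps)
  then show ?case using dg c s by (simp add: algebra_simps)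
qed

lemma prod_lin:
  fixes A :: "'a::comm_ring_1 set"
  assumes "finite A"
  shows "degree (\<Prod>r\<in>A. [:-r,1:]) \<le> card A \<and> coeff (\<Prod>r\<in>A. [:-r,1:]) (card A) = 1
    \<and> sb (\<Prod>r\<in>A. [:-r,1:]) (card A) = - (\<Sum>A)"
  using assms
proof (induction A rule: finite_induct)
  case empty
  then show ?case by (simp add: sb_def)
next
  case (insert a A)
  have d1: "degree [:-a,1:] \<le> 1" by simp
  have e: "(\<Prod>r\<in>insert a A. [:-r,1:]) = [:-a,1:] * (\<Prod>r\<in>A. [:-r,1:])"
    using insert by simp
  have dg: "degree (\<Prod>r\<in>insert a A. [:-r,1:]) \<le> 1 + card A"
    unfolding e using insert d1
    by (metis (no_types, lifting) add_le_mono degree_mult_le order_trans)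
  have c: "coeff (\<Prod>r\<in>insert a A. [:-r,1:]) (1 + card A) = 1"
    unfolding e using coeff_mult_top[OF d1, of _ "card A"] insert by simp
  have s: "sb (\<Prod>r\<in>insert a A. [:-r,1:]) (1 + card A) = - a - \<Sum>A"
    unfolding e using sb_mult[OF d1, of _ "card A"] insert by (simp add: sb_def)
  show ?case using dg c s insert by simp
qed



definition pl :: "nat \<Rightarrow> 'a::comm_ring_1 form3 \<Rightarrow> 'a\<times>'a\<times>'a \<Rightarrow> 'a\<times>'a\<times>'a \<Rightarrow> 'a poly" where
 "pl d F P Q = (case P of (p1,p2,p3) \<Rightarrow> case Q of (q1,q2,q3) \<Rightarrow>
    \<Sum>i\<le>d. \<Sum>j\<le>d. \<Sum>k\<le>d. smult (F(i,j,k)) ([:p1,q1:]^i * [:p2,q2:]^j * [:p3,q3:]^k))"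

lemma poly_pl: "poly (pl d F (p1,p2,p3) (q1,q2,q3)) t = eval_form d F (p1 + t*q1, p2+t*q2, p3+t*q3)"
  by (simp add: pl_def eval_form_def poly_sum algebra_simps)

lemma sb_sum: "sb (sum f A) m = (\<Sum>x\<in>A. sb (f x) m)"
  by (simp add: sb_def coeff_sum)

lemma sb_smult: "sb (smult c p) m = c * sb p m"
  by (simp add: sb_def)

lemma mono3:
  fixes p1 p2 p3 q1 q2 q3 :: "'a::comm_ring_1"
  shows "degree ([:p1,q1:]^i * [:p2,q2:]^j * [:p3,q3:]^k) \<le> i + j + k
   \<and> coeff ([:p1,q1:]^i * [:p2,q2:]^j * [:p3,q3:]^k) (i+j+k) = q1^i * q2^j * q3^k
   \<and> sb ([:p1,q1:]^i * [:p2,q2:]^j * [:p3,q3:]^k) (i+j+k) =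
      p1 * (of_nat i * q1^(i-1) * q2^j * q3^k) + p2 * (of_nat j * q1^i * q2^(j-1) * q3^k)
      + p3 * (of_nat k * q1^i * q2^j * q3^(k-1))"
proof -
  note a = lin_pow[of p1 q1 i] and b = lin_pow[of p2 q2 j] and c = lin_pow[of p3 q3 k]
  have d12: "degree ([:p1,q1:]^i * [:p2,q2:]^j) \<le> i + j"
    using a b by (meson add_le_mono degree_mult_le order_trans)
  have d: "degree ([:p1,q1:]^i * [:p2,q2:]^j * [:p3,q3:]^k) \<le> i + j + k"
    using d12 c by (meson add_le_mono degree_mult_le order_trans)
  have c12: "coeff ([:p1,q1:]^i * [:p2,q2:]^j) (i+j) = q1^i * q2^j"
    using coeff_mult_top[of "[:p1,q1:]^i" i "[:p2,q2:]^j" j] a b by simp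
  have s12: "sb ([:p1,q1:]^i * [:p2,q2:]^j) (i+j) = of_nat i * p1 * q1^(i-1) * q2^j + q1^i * (of_nat j * p2 * q2^(j-1))"
    using sb_mult[of "[:p1,q1:]^i" i "[:p2,q2:]^j" j] a b by simp
  have cc: "coeff ([:p1,q1:]^i * [:p2,q2:]^j * [:p3,q3:]^k) (i+j+k) = q1^i * q2^j * q3^k"
    using coeff_mult_top[OF d12, of "[:p3,q3:]^k" k] c12 c by simp
  have ss: "sb ([:p1,q1:]^i * [:p2,q2:]^j * [:p3,q3:]^k) (i+j+k) =
     (of_nat i * p1 * q1^(i-1) * q2^j + q1^i * (of_nat j * p2 * q2^(j-1))) * q3^k + q1^i * q2^j * (of_nat k * p3 * q3^(k-1))"
    using sb_mult[OF d12, of "[:p3,q3:]^k" k] c12 s12 c by simp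
  show ?thesis using d cc ss by (simp add: algebra_simps)
qed

lemma pl_props:
  fixes F :: "'a::comm_ring_1 form3"
  assumes h: "hom_form d F"
  shows "degree (pl d F (p1,p2,p3) (q1,q2,q3)) \<le> d
   \<and> coeff (pl d F (p1,p2,p3) (q1,q2,q3)) d = eval_form d F (q1,q2,q3)
   \<and> sb (pl d F (p1,p2,p3) (q1,q2,q3)) d =
      p1 * (\<Sum>i\<le>d. \<Sum>j\<le>d. \<Sum>k\<le>d. F(i,j,k) * (of_nat i * q1^(i-1) * q2^j * q3^k))
    + p2 * (\<Sum>i\<le>d. \<Sum>j\<le>d. \<Sum>k\<le>d. F(i,j,k) * (of_nat j * q1^i * q2^(j-1) * q3^k))
    + p3 * (\<Sum>i\<le>d. \<Sum>j\<le>d. \<Sum>k\<le>d. F(i,j,k) * (of_nat k * q1^i * q2^j * q3^(k-1)))"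
proof -
  let ?M = "\<lambda>i j k. [:p1,q1:]^i * [:p2,q2:]^j * [:p3,q3:]^k"
  have hd: "\<And>i j k. F(i,j,k) \<noteq> 0 \<Longrightarrow> i + j + k = d" using h by (auto simp: hom_form_def)
  have deg: "degree (smult (F(i,j,k)) (?M i j k)) \<le> d" for i j k
    using hd[of i j k] mono3[of p1 q1 i p2 q2 j p3 q3 k] by (cases "F(i,j,k) = 0") (auto intro: order_trans[OF degree_smult_le])
  have co: "coeff (smult (F(i,j,k)) (?M i j k)) d = F(i,j,k) * (q1^i * q2^j * q3^k)" for i j k
    using hd[of i j k] mono3[of p1 q1 i p2 q2 j p3 q3 k] by (cases "F(i,j,k) = 0") (auto intro: order_trans[OF degree_smult_le])
  have sbt: "sb (smult (F(i,j,k)) (?M i j k)) d = F(i,j,k) * (p1 * (of_nat i * q1^(i-1) * q2^j * q3^k) + p2 * (of_nat j * q1^i * q2^(j-1) * q3^k)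
      + p3 * (of_nat k * q1^i * q2^j * q3^(k-1)))" for i j k
    using hd[of i j k] mono3[of p1 q1 i p2 q2 j p3 q3 k] by (cases "F(i,j,k) = 0") (auto simp: sb_smult sb_def)
  have "degree (pl d F (p1,p2,p3) (q1,q2,q3)) \<le> d"
    unfolding pl_def by (auto intro!: degree_sum_le deg)
  moreover have "coeff (pl d F (p1,p2,p3) (q1,q2,q3)) d = eval_form d F (q1,q2,q3)"
    unfolding pl_def eval_form_def by (simp only: coeff_sum co prod.case) (simp add: algebra_simps)
  moreover have "sb (pl d F (p1,p2,p3) (q1,q2,q3)) d = 
      p1 * (\<Sum>i\<le>d. \<Sum>j\<le>d. \<Sum>k\<le>d. F(i,j,k) * (of_nat i * q1^(i-1) * q2^j * q3^k))
    + p2 * (\<Sum>i\<le>d. \<Sum>j\<le>d. \<Sum>k\<le>d. F(i,j,k) * (of_nat j * q1^i * q2^(j-1) * q3^k))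
    + p3 * (\<Sum>i\<le>d. \<Sum>j\<le>d. \<Sum>k\<le>d. F(i,j,k) * (of_nat k * q1^i * q2^j * q3^(k-1)))"
    unfolding pl_def by (simp only: sb_sum sbt prod.case) (simp add: algebra_simps sum_distrib_left sum.distrib)
  ultimately show ?thesis by blast
qed



definition dot :: "'a::comm_ring_1 \<times> 'a \<times> 'a \<Rightarrow> 'a \<times> 'a \<times> 'a \<Rightarrow> 'a" where
  "dot u v = fst u * fst v + fst (snd u) * fst (snd v) + snd (snd u) * snd (snd v)"
definition smul :: "'a::comm_ring_1 \<Rightarrow> 'a \<times> 'a \<times> 'a \<Rightarrow> 'a \<times> 'a \<times> 'a" where
  "smul t v = (t * fst v, t * fst (snd v), t * snd (snd v))"
definition vadd :: "'a::comm_ring_1 \<times> 'a \<times> 'a \<Rightarrow> 'a \<times> 'a \<times> 'a \<Rightarrow> 'a \<times> 'a \<times> 'a" where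
  "vadd u v = (fst u + fst v, fst (snd u) + fst (snd v), snd (snd u) + snd (snd v))"
definition cross :: "'a::comm_ring_1 \<times> 'a \<times> 'a \<Rightarrow> 'a \<times> 'a \<times> 'a \<Rightarrow> 'a \<times> 'a \<times> 'a" where
  "cross u v = (fst (snd u) * snd (snd v) - snd (snd u) * fst (snd v),
                snd (snd u) * fst v - fst u * snd (snd v),
                fst u * fst (snd v) - fst (snd u) * fst v)"

lemma dot_vadd[simp]: "dot l (vadd u v) = dot l u + dot l v"
  by (simp add: dot_def vadd_def algebra_simps)
lemma dot_vadd1[simp]: "dot (vadd u v) l = dot u l + dot v l"
  by (simp add: dot_def vadd_def algebra_simps)
lemma dot_smul[simp]: "dot l (smul t v) = t * dot l v"
  by (simp add: dot_def smul_def algebra_simps)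
lemma dot_smul1[simp]: "dot (smul t v) l = t * dot v l"
  by (simp add: dot_def smul_def algebra_simps)
lemma dot_zero[simp]: "dot (0,0,0) v = 0"
  by (simp add: dot_def)

lemma dot_all_zero:
  fixes l :: "'a::comm_ring_1 \<times> 'a \<times> 'a"
  assumes "\<And>v. dot l v = 0" shows "l = (0,0,0)"
  using assms[of "(1,0,0)"] assms[of "(0,1,0)"] assms[of "(0,0,1)"]
  by (cases l) (simp add: dot_def)

lemma proj_self: "v \<in> proj_class v"
  unfolding proj_class_def by (cases v) (auto intro!: exI[of _ 1])

lemma proj_elem: "u \<in> proj_class v \<Longrightarrow> \<exists>t. t \<noteq> 0 \<and> u = smul t v"
  unfolding proj_class_def smul_def by (cases v) auto

lemma proj_smul:
  fixes v :: "'a::field \<times> 'a \<times> 'a"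
  assumes "t \<noteq> 0" shows "proj_class (smul t v) = proj_class v"
proof -
  obtain a b c where v: "v = (a,b,c)" by (cases v)
  have "{(s * (t * a), s * (t * b), s * (t * c)) |s. s \<noteq> 0} = {(s * a, s * b, s * c) |s. s \<noteq> 0}"
  proof (intro set_eqI iffI)
    fix x assume "x \<in> {(s * (t * a), s * (t * b), s * (t * c)) |s. s \<noteq> 0}"
    then obtain s where "s \<noteq> 0" "x = (s * (t * a), s * (t * b), s * (t * c))" by blast
    then show "x \<in> {(s * a, s * b, s * c) |s. s \<noteq> 0}" using assms
      by (auto intro!: exI[of _ "s*t"] simp: algebra_simps)
  next
    fix x assume "x \<in> {(s * a, s * b, s * c) |s. s \<noteq> 0}"
    then obtain s where "s \<noteq> 0" "x = (s * a, s * b, s * c)" by blast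
    then show "x \<in> {(s * (t * a), s * (t * b), s * (t * c)) |s. s \<noteq> 0}" using assms
      by (auto intro!: exI[of _ "s/t"] simp: algebra_simps)
  qed
  then show ?thesis by (simp add: proj_class_def smul_def v)
qed

lemma proj_eq:
  fixes u v :: "'a::field \<times> 'a \<times> 'a"
  assumes "proj_class u = proj_class v" shows "\<exists>t. t \<noteq> 0 \<and> u = smul t v"
  using proj_self[of u] assms proj_elem by metis

lemma in_P2: "v \<noteq> (0,0,0) \<Longrightarrow> proj_class v \<in> P2"
  unfolding P2_def by blast

lemma P2_cases: "P \<in> P2 \<Longrightarrow> \<exists>v. v \<noteq> (0,0,0) \<and> P = proj_class v"
  unfolding P2_def by blast

lemma hom_eval:
  fixes F :: "'a::comm_ring_1 form3"
  assumes "hom_form d F"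
  shows "eval_form d F (smul t v) = t^d * eval_form d F v"
proof -
  obtain a b c where v: "v = (a,b,c)" by (cases v)
  have hd: "\<And>i j k. F(i,j,k) \<noteq> 0 \<Longrightarrow> i + j + k = d" using assms by (auto simp: hom_form_def)
  have "F(i,j,k) * (t*a)^i * (t*b)^j * (t*c)^k = t^d * (F(i,j,k) * a^i * b^j * c^k)" for i j k
  proof (cases "F(i,j,k) = 0")
    case False
    then have "d = i + j + k" using hd by auto
    then show ?thesis by (simp add: power_mult_distrib power_add algebra_simps)
  qed simp
  then show ?thesis by (simp add: eval_form_def smul_def v sum_distrib_left)
qed

lemma curve_mem:
  fixes F :: "'a::field form3"
  assumes "hom_form d F" "v \<noteq> (0,0,0)"
  shows "proj_class v \<in> curve_points d F \<longleftrightarrow> eval_form d F v = 0"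
proof
  assume "proj_class v \<in> curve_points d F"
  then show "eval_form d F v = 0" using proj_self[of v] by (auto simp: curve_points_def)
next
  assume e: "eval_form d F v = 0"
  have "\<forall>u\<in>proj_class v. eval_form d F u = 0"
  proof
    fix u assume "u \<in> proj_class v"
    then obtain t where "u = smul t v" using proj_elem by blast
    then show "eval_form d F u = 0" using hom_eval[OF assms(1)] e by simp
  qed
  then show "proj_class v \<in> curve_points d F" using in_P2[OF assms(2)] by (simp add: curve_points_def)
qed

lemma line_dot: "(case l of (a,b,c) \<Rightarrow> case v of (x,y,z) \<Rightarrow> a*x + b*y + c*z = 0) \<longleftrightarrow> dot l v = 0"
  by (cases l; cases v) (simp add: dot_def)

lemma line_mem:
  fixes l v :: "'a::field \<times> 'a \<times> 'a"
  assumes "v \<noteq> (0,0,0)"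
  shows "proj_class v \<in> line_points l \<longleftrightarrow> dot l v = 0"
proof
  assume "proj_class v \<in> line_points l"
  then show "dot l v = 0" using proj_self[of v] by (auto simp: line_points_def line_dot)
next
  assume e: "dot l v = 0"
  have "\<forall>u\<in>proj_class v. dot l u = 0"
    using proj_elem e by fastforce
  then show "proj_class v \<in> line_points l" using in_P2[OF assms] by (simp add: line_points_def line_dot)
qed

lemma line_eq:
  fixes l l' :: "'a::field \<times> 'a \<times> 'a"
  assumes "t \<noteq> 0" "\<And>v. dot l v = t * dot l' v"
  shows "line_points l = line_points l'"
  unfolding line_points_def line_dot using assms by auto

lemma cross_zero_prop:
  fixes l1 l2 :: "'a::field \<times> 'a \<times> 'a"
  assumes "l1 \<noteq> (0,0,0)" "l2 \<noteq> (0,0,0)" "cross l2 l1 = (0,0,0)"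
  shows "line_points l2 = line_points l1"
proof -
  obtain a1 a2 a3 where l1: "l1 = (a1,a2,a3)" by (cases l1)
  obtain b1 b2 b3 where l2: "l2 = (b1,b2,b3)" by (cases l2)
  have c: "b2 * a3 = b3 * a2" "b3 * a1 = b1 * a3" "b1 * a2 = b2 * a1"
    using assms(3) by (auto simp: cross_def l1 l2)
  have "\<exists>t. t \<noteq> 0 \<and> (\<forall>v. dot l2 v = t * dot l1 v)"
  proof (cases "a1 \<noteq> 0")
    case True
    have "b2 = b1 / a1 * a2" "b3 = b1 / a1 * a3" using c True by (simp_all add: field_simps)
    moreover have "b1 \<noteq> 0" using assms(2) calculation l2 by auto
    ultimately show ?thesis using True
      by (intro exI[of _ "b1/a1"]) (auto simp: dot_def l1 l2 algebra_simps)
  next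
    case F1: False
    show ?thesis
    proof (cases "a2 \<noteq> 0")
      case True
      have "b1 = b2 / a2 * a1" "b3 = b2 / a2 * a3" using c True by (simp_all add: field_simps)
      moreover have "b2 \<noteq> 0" using assms(2) calculation l2 by auto
      ultimately show ?thesis using True
        by (intro exI[of _ "b2/a2"]) (auto simp: dot_def l1 l2 algebra_simps)
    next
      case False
      then have "a3 \<noteq> 0" using F1 assms(1) l1 by auto
      have "b1 = b3 / a3 * a1" "b2 = b3 / a3 * a2" using c \<open>a3 \<noteq> 0\<close> by (simp_all add: field_simps)
      moreover have "b3 \<noteq> 0" using assms(2) calculation l2 by auto
      ultimately show ?thesis using \<open>a3 \<noteq> 0\<close>
        by (intro exI[of _ "b3/a3"]) (auto simp: dot_def l1 l2 algebra_simps)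
    qed
  qed
  then show ?thesis using line_eq by metis
qed

lemma trip_cyc: "dot u (cross v w) = dot v (cross w u)"
  by (simp add: dot_def cross_def algebra_simps)
lemma trip_0a: "dot u (cross u w) = 0"
  by (simp add: dot_def cross_def algebra_simps)
lemma trip_0b: "dot u (cross w u) = 0"
  by (simp add: dot_def cross_def algebra_simps)
lemma span_id: "smul (dot r (cross l2 l1)) v = vadd (smul (dot r v) (cross l2 l1)) (vadd (smul (dot l2 v) (cross l1 r)) (smul (dot l1 v) (cross r l2)))"
  by (cases r; cases l1; cases l2; cases v) (simp add: dot_def cross_def smul_def vadd_def, simp add: algebra_simps)
lemma smul_vadd: "smul t (vadd u v) = vadd (smul t u) (smul t v)"
  by (simp add: smul_def vadd_def algebra_simps)
lemma smul_smul: "smul s (smul t v) = smul (s * t) v"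
  by (simp add: smul_def algebra_simps)
lemma smul_one: "smul 1 v = v"
  by (simp add: smul_def)

lemma basis_gen:
  fixes l1 l2 r :: "'a::field \<times> 'a \<times> 'a"
  assumes D: "dot r (cross l2 l1) \<noteq> 0"
  defines "e1 \<equiv> smul (1 / dot r (cross l2 l1)) (cross l2 l1)"
      and "e2 \<equiv> smul (1 / dot r (cross l2 l1)) (cross l1 r)"
      and "e3 \<equiv> smul (1 / dot r (cross l2 l1)) (cross r l2)"
  shows "dot l1 e1 = 0 \<and> dot l1 e2 = 0 \<and> dot l1 e3 = 1 \<and> dot l2 e1 = 0 \<and> dot l2 e2 = 1 \<and> dot l2 e3 = 0
     \<and> dot r e1 = 1 \<and> dot r e2 = 0 \<and> dot r e3 = 0
     \<and> (\<forall>v. v = vadd (smul (dot r v) e1) (vadd (smul (dot l2 v) e2) (smul (dot l1 v) e3)))"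
proof -
  let ?D = "dot r (cross l2 l1)"
  have c1: "dot l1 (cross r l2) = ?D" "dot l2 (cross l1 r) = ?D"
    using trip_cyc by metis+
  have sp: "v = vadd (smul (dot r v) e1) (vadd (smul (dot l2 v) e2) (smul (dot l1 v) e3))" for v
  proof -
    have "v = smul (1/?D) (smul ?D v)" using D by (simp add: smul_smul smul_one)
    also have "\<dots> = vadd (smul (dot r v) e1) (vadd (smul (dot l2 v) e2) (smul (dot l1 v) e3))"
      unfolding span_id e1_def e2_def e3_def by (simp add: smul_vadd smul_smul mult.commute)
    finally show ?thesis .
  qed
  show ?thesis using D sp
    by (simp add: e1_def e2_def e3_def c1 trip_0a trip_0b)
qed



lemma dot_zero2[simp]: "dot v (0,0,0) = 0"
  by (simp add: dot_def)

lemma basis: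
  fixes l1 l2 :: "'a::field \<times> 'a \<times> 'a"
  assumes "l1 \<noteq> (0,0,0)" "l2 \<noteq> (0,0,0)" "line_points l1 \<noteq> line_points l2"
  shows "\<exists>e1 e2 e3 f1. dot l1 e1 = 0 \<and> dot l1 e2 = 0 \<and> dot l1 e3 = 1 \<and> dot l2 e1 = 0 \<and> dot l2 e2 = 1 \<and> dot l2 e3 = 0
     \<and> dot f1 e1 = 1 \<and> dot f1 e2 = 0 \<and> dot f1 e3 = 0
     \<and> (\<forall>v. v = vadd (smul (dot f1 v) e1) (vadd (smul (dot l2 v) e2) (smul (dot l1 v) e3)))"
proof -
  have cz: "cross l2 l1 \<noteq> (0,0,0)" using cross_zero_prop[OF assms(1,2)] assms(3) by metis
  obtain w1 w2 w3 where w: "cross l2 l1 = (w1,w2,w3)" by (cases "cross l2 l1")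
  have "\<exists>r. dot r (cross l2 l1) \<noteq> 0"
  proof (cases "w1 \<noteq> 0")
    case True then show ?thesis by (intro exI[of _ "(1,0,0)"]) (simp add: w dot_def)
  next
    case F1: False
    show ?thesis
    proof (cases "w2 \<noteq> 0")
      case True then show ?thesis by (intro exI[of _ "(0,1,0)"]) (simp add: w dot_def)
    next
      case False
      then have "w3 \<noteq> 0" using F1 cz w by auto
      then show ?thesis by (intro exI[of _ "(0,0,1)"]) (simp add: w dot_def)
    qed
  qed
  then obtain r where "dot r (cross l2 l1) \<noteq> 0" by blast
  from basis_gen[OF this] show ?thesis by blast
qed

lemma poly_pl': "poly (pl d F P Q) t = eval_form d F (vadd P (smul t Q))"
  by (cases P; cases Q) (simp add: poly_pl vadd_def smul_def algebra_simps)

definition gradA :: "nat \<Rightarrow> 'a::comm_ring_1 form3 \<Rightarrow> 'a\<times>'a\<times>'a \<Rightarrow> 'a\<times>'a\<times>'a" where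
  "gradA d F Q = (case Q of (q1,q2,q3) \<Rightarrow>
     ((\<Sum>i\<le>d. \<Sum>j\<le>d. \<Sum>k\<le>d. F(i,j,k) * (of_nat i * q1^(i-1) * q2^j * q3^k)),
      (\<Sum>i\<le>d. \<Sum>j\<le>d. \<Sum>k\<le>d. F(i,j,k) * (of_nat j * q1^i * q2^(j-1) * q3^k)),
      (\<Sum>i\<le>d. \<Sum>j\<le>d. \<Sum>k\<le>d. F(i,j,k) * (of_nat k * q1^i * q2^j * q3^(k-1)))))"

lemma pl_props':
  fixes F :: "'a::comm_ring_1 form3"
  assumes h: "hom_form d F"
  shows "degree (pl d F P Q) \<le> d \<and> coeff (pl d F P Q) d = eval_form d F Q
    \<and> sb (pl d F P Q) d = dot P (gradA d F Q)"
  using pl_props[OF h] by (cases P; cases Q) (simp add: gradA_def dot_def)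

lemma sum_all_eq:
  fixes f :: "'b \<Rightarrow> nat"
  assumes "finite A" "\<And>a. a \<in> A \<Longrightarrow> f a \<le> m" "sum f A = card A * m" "a \<in> A"
  shows "f a = m"
proof (rule ccontr)
  assume "f a \<noteq> m"
  then have "f a < m" using assms(2)[OF assms(4)] by simp
  then have "sum f A < sum (\<lambda>_. m) A"
    using assms by (intro sum_strict_mono_ex1) auto
  then show False using assms(3) by simp
qed




theorem corollary3p10:
  fixes F :: "'a::{finite,field} form3" and q :: nat
  assumes "q = card (UNIV :: 'a set)" and "q \<ge> 5"
    and "hom_form (q - 1) F"
    and "\<not> has_linear_component (q - 1) F"
    and "Nq (q - 1) F = (q - 1)^2"
    and "L1 \<in> Fq_lines" and "L2 \<in> Fq_lines" and "L1 \<noteq> L2"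
    and "L1 \<union> L2 \<subseteq> Zset (q - 1) F"
  shows "a0 (q - 1) F = 3"
proof -
  define d where "d = q - 1"
  note hom = assms(3)[folded d_def]
  define G where "G = eval_form d F"
  define C where "C = curve_points d F"
  have qd: "q = d + 1" "d \<ge> 4" using assms(2) by (auto simp: d_def)
  have cardU: "card (UNIV :: 'a set) = d + 1" using assms(1) qd by simp
  obtain l1 where l1: "l1 \<noteq> (0,0,0)" "L1 = line_points l1" using assms(6) by (auto simp: Fq_lines_def)
  obtain l2 where l2: "l2 \<noteq> (0,0,0)" "L2 = line_points l2" using assms(7) by (auto simp: Fq_lines_def)
  obtain e1 e2 e3 f1 where B: "dot l1 e1 = 0" "dot l1 e2 = 0" "dot l1 e3 = 1" "dot l2 e1 = 0" "dot l2 e2 = 1" "dot l2 e3 = 0"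
     "dot f1 e1 = 1" "dot f1 e2 = 0" "dot f1 e3 = 0"
     and span: "\<And>v. v = vadd (smul (dot f1 v) e1) (vadd (smul (dot l2 v) e2) (smul (dot l1 v) e3))"
    using basis[OF l1(1) l2(1)] assms(8) l1 l2 by metis
  have dotexp: "dot l v = dot f1 v * dot l e1 + dot l2 v * dot l e2 + dot l1 v * dot l e3" for l v
    by (subst span[of v]) simp
  have nz: "v \<noteq> (0,0,0)" if "dot l v \<noteq> 0" for l v using that by auto
  have Zs: "L1 \<inter> C = {}" "L2 \<inter> C = {}" using assms(9) by (auto simp: Zset_def C_def d_def)
  have offC1: "G v \<noteq> 0" if "v \<noteq> (0,0,0)" "dot l1 v = 0" for v
  proof
    assume "G v = 0"
    then have "proj_class v \<in> C" using curve_mem[OF hom that(1)] by (simp add: C_def G_def)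
    moreover have "proj_class v \<in> L1" using line_mem[OF that(1), of l1] that l1 by simp
    ultimately show False using Zs(1) by blast
  qed
  have offC2: "G v \<noteq> 0" if "v \<noteq> (0,0,0)" "dot l2 v = 0" for v
  proof
    assume "G v = 0"
    then have "proj_class v \<in> C" using curve_mem[OF hom that(1)] by (simp add: C_def G_def)
    moreover have "proj_class v \<in> L2" using line_mem[OF that(1), of l2] that l2 by simp
    ultimately show False using Zs(2) by blast
  qed
  define \<Phi> where "\<Phi> x y = vadd (smul x e1) (vadd (smul y e2) e3)" for x y
  have dP: "dot l (\<Phi> x y) = x * dot l e1 + y * dot l e2 + dot l e3" for l x y
    by (simp add: \<Phi>_def)
  have Pnz: "\<Phi> x y \<noteq> (0,0,0)" for x y using nz[of l1 "\<Phi> x y"] by (simp add: dP B)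
  have lam: "G e1 \<noteq> 0" using offC1[OF nz[of f1 e1]] B by simp
  define p where "p y = pl d F (\<Phi> 0 y) e1" for y
  have Pe: "vadd (\<Phi> 0 y) (smul x e1) = \<Phi> x y" for x y
    by (simp add: \<Phi>_def vadd_def smul_def algebra_simps)
  have poly_p: "poly (p y) x = G (\<Phi> x y)" for x y
    by (simp add: p_def poly_pl' Pe G_def)
  have degp: "degree (p y) \<le> d" and cop: "coeff (p y) d = G e1"
     and sbp: "sb (p y) d = y * dot e2 (gradA d F e1) + dot e3 (gradA d F e1)" for y
    using pl_props'[OF hom, of "\<Phi> 0 y" e1] by (simp_all add: p_def G_def \<Phi>_def)
  define K1 where "K1 = dot e2 (gradA d F e1)"
  define K0 where "K0 = dot e3 (gradA d F e1)"
  define Cf where "Cf y = {x. G (\<Phi> x y) = 0}" for y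
  have cardCf: "card (Cf y) \<le> d" for y
  proof -
    have "p y \<noteq> 0" using cop[of y] lam by auto
    then have "card {x. poly (p y) x = 0} \<le> degree (p y)" by (rule card_poly_roots_bound)
    then show ?thesis using degp[of y] by (simp add: Cf_def poly_p)
  qed
  define \<psi> where "\<psi> = (\<lambda>(y,x). proj_class (\<Phi> x y))"
  have Cpar: "C = \<psi> ` (SIGMA y:UNIV-{0}. Cf y)"
  proof (intro equalityI subsetI)
    fix P assume PC: "P \<in> C"
    then have "P \<in> P2" by (simp add: C_def curve_points_def)
    then obtain v where v: "v \<noteq> (0,0,0)" "P = proj_class v" using P2_cases by blast
    have z: "dot l1 v \<noteq> 0"
    proof
      assume "dot l1 v = 0"
      then have "P \<in> L1" using line_mem[OF v(1)] v l1 by simp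
      then show False using Zs PC by blast
    qed
    have y: "dot l2 v \<noteq> 0"
    proof
      assume "dot l2 v = 0"
      then have "P \<in> L2" using line_mem[OF v(1)] v l2 by simp
      then show False using Zs PC by blast
    qed
    define x0 where "x0 = dot f1 v / dot l1 v"
    define y0 where "y0 = dot l2 v / dot l1 v"
    have "smul (dot l1 v) (\<Phi> x0 y0) = v"
      using z span[of v] by (simp add: \<Phi>_def smul_vadd smul_smul x0_def y0_def smul_one)
    then have Pv: "P = proj_class (\<Phi> x0 y0)" using proj_smul[OF z] v by metis
    then have "G (\<Phi> x0 y0) = 0" using PC curve_mem[OF hom Pnz] by (simp add: C_def G_def)
    moreover have "y0 \<noteq> 0" using y z by (simp add: y0_def)
    ultimately show "P \<in> \<psi> ` (SIGMA y:UNIV-{0}. Cf y)"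
      using Pv by (auto simp: \<psi>_def Cf_def intro!: image_eqI[of _ _ "(y0,x0)"])
  next
    fix P assume "P \<in> \<psi> ` (SIGMA y:UNIV-{0}. Cf y)"
    then obtain x y where "P = proj_class (\<Phi> x y)" "G (\<Phi> x y) = 0"
      by (auto simp: \<psi>_def Cf_def)
    then show "P \<in> C" using curve_mem[OF hom Pnz] by (simp add: C_def G_def)
  qed
  have injpsi: "inj_on \<psi> X" for X
  proof (rule inj_onI)
    fix a b assume "a \<in> X" "b \<in> X" "\<psi> a = \<psi> b"
    obtain y x y' x' where ab: "a = (y,x)" "b = (y',x')" by (cases a; cases b)
    have "proj_class (\<Phi> x y) = proj_class (\<Phi> x' y')" using \<open>\<psi> a = \<psi> b\<close> by (simp add: \<psi>_def ab)
    then obtain t where t: "\<Phi> x y = smul t (\<Phi> x' y')" using proj_eq by blast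
    have "dot l1 (\<Phi> x y) = t * dot l1 (\<Phi> x' y')" "dot f1 (\<Phi> x y) = t * dot f1 (\<Phi> x' y')"
        "dot l2 (\<Phi> x y) = t * dot l2 (\<Phi> x' y')" by (simp_all add: t)
    then show "a = b" by (simp add: dP B ab)
  qed
  have sumCf: "(\<Sum>y\<in>UNIV-{0}. card (Cf y)) = d * d"
  proof -
    have "card C = d * d" using assms(5) by (simp add: C_def Nq_def d_def power2_eq_square)
    moreover have "card C = card (SIGMA y:UNIV-{0}. Cf y)"
      unfolding Cpar by (rule card_image[OF injpsi])
    moreover have "card (SIGMA y:UNIV-{0}. Cf y) = (\<Sum>y\<in>UNIV-{0}. card (Cf y))"
      by (rule card_SigmaI) auto
    ultimately show ?thesis by simp
  qed
  have cU0: "card (UNIV - {0::'a}) = d" using cardU by simp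
  have fib: "card (Cf y) = d" if "y \<noteq> 0" for y
    using sum_all_eq[of "UNIV-{0}" "\<lambda>y. card (Cf y)" d y] cardCf sumCf cU0 that by simp
  have "\<exists>g. UNIV - Cf y = {g}" if "y \<noteq> 0" for y
  proof -
    have "card (UNIV - Cf y) = 1" using fib[OF that] cardU by (simp add: card_Diff_subset)
    then show ?thesis by (meson card_1_singletonE)
  qed
  then obtain g where g: "\<And>y. y \<noteq> 0 \<Longrightarrow> UNIV - Cf y = {g y}" by metis
  have gG: "G (\<Phi> x y) = 0 \<longleftrightarrow> x \<noteq> g y" if "y \<noteq> 0" for x y
    using g[OF that] by (auto simp: Cf_def)
  define S where "S = (\<Sum>r\<in>(UNIV::'a set). r)"
  have gaff: "g y = S + (y * K1 + K0) / G e1" if y0: "y \<noteq> 0" for y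
  proof -
    define A where "A = UNIV - {g y}"
    define Pi where "Pi = (\<Prod>r\<in>A. [:-r,1:])"
    have cA: "card A = d" using cardU by (simp add: A_def)
    have PP: "degree Pi \<le> d" "coeff Pi d = 1" "sb Pi d = - (\<Sum>A)"
      using prod_lin[of A] cA by (simp_all add: Pi_def)
    have eq: "p y = smult (G e1) Pi"
    proof (rule poly_eqI_degree_lead_coeff[where n=d and A=A])
      show "coeff (p y) d = coeff (smult (G e1) Pi) d" using cop PP by simp
      show "d \<le> card A" using cA by simp
      show "degree (p y) \<le> d" by (rule degp)
      show "degree (smult (G e1) Pi) \<le> d" using PP(1) degree_smult_le order_trans by blast
      fix z assume z: "z \<in> A"
      then have "G (\<Phi> z y) = 0" using gG[OF y0] by (simp add: A_def)
      moreover have "poly Pi z = 0" using z by (auto simp: Pi_def poly_prod A_def)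
      ultimately show "poly (p y) z = poly (smult (G e1) Pi) z" by (simp add: poly_p)
    qed
    have "sb (p y) d = G e1 * (- (S - g y))"
      using PP(3) by (simp add: eq sb_smult A_def S_def sum_diff1)
    then have "y * K1 + K0 = G e1 * (g y - S)" using sbp[of y] by (simp add: K1_def K0_def algebra_simps)
    then show ?thesis using lam by (simp add: field_simps)
  qed
  define \<alpha> where "\<alpha> = K1 / G e1"
  define \<beta> where "\<beta> = S + K0 / G e1"
  have gab: "g y = \<alpha> * y + \<beta>" if "y \<noteq> 0" for y
    using gaff[OF that] lam by (simp add: \<alpha>_def \<beta>_def field_simps)
  define l3 where "l3 = vadd f1 (vadd (smul (-\<alpha>) l2) (smul (-\<beta>) l1))"
  have dl3: "dot l3 v = dot f1 v - \<alpha> * dot l2 v - \<beta> * dot l1 v" for v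
    by (simp add: l3_def)
  have l3nz: "l3 \<noteq> (0,0,0)" using dl3[of e1] B by auto
  define L3 where "L3 = line_points l3"
  have L3in: "L3 \<in> Fq_lines" using l3nz unfolding L3_def Fq_lines_def by blast
  have L1in: "L1 \<in> Fq_lines" "L2 \<in> Fq_lines" using assms(6,7) by auto
  have e1nz: "e1 \<noteq> (0,0,0)" using nz[of f1 e1] B by simp
  have e1L: "proj_class e1 \<in> L1" "proj_class e1 \<in> L2" "proj_class e1 \<notin> L3"
    using line_mem[OF e1nz] B l1 l2 by (simp_all add: L3_def dl3)
  have L3C: "L3 \<inter> C = {}"
  proof (rule ccontr)
    assume "L3 \<inter> C \<noteq> {}"
    then obtain P where P: "P \<in> L3" "P \<in> C" by blast
    then obtain y x where yx: "y \<noteq> 0" "x \<in> Cf y" "P = proj_class (\<Phi> x y)"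
      unfolding Cpar by (auto simp: \<psi>_def)
    then have "x \<noteq> g y" using gG by (simp add: Cf_def)
    moreover have "dot l3 (\<Phi> x y) = 0" using P(1) yx line_mem[OF Pnz] by (simp add: L3_def)
    ultimately show False using gab[OF yx(1)] by (simp add: dl3 dP B algebra_simps)
  qed
  have setEq: "{L \<in> Fq_lines. L \<inter> C = {}} = {L1, L2, L3}"
  proof (intro equalityI subsetI)
    fix L assume "L \<in> {L1, L2, L3}"
    then show "L \<in> {L \<in> Fq_lines. L \<inter> C = {}}" using L1in L3in Zs L3C by auto
  next
    fix L assume "L \<in> {L \<in> Fq_lines. L \<inter> C = {}}"
    then obtain l where l: "l \<noteq> (0,0,0)" "L = line_points l" "L \<inter> C = {}"
      by (auto simp: Fq_lines_def)
    define a where "a = dot l e1"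
    define b where "b = dot l e2"
    define c where "c = dot l e3"
    have dl: "dot l v = a * dot f1 v + b * dot l2 v + c * dot l1 v" for v
      using dotexp[of l v] by (simp add: a_def b_def c_def algebra_simps)
    have dlP: "dot l (\<Phi> x y) = a * x + b * y + c" for x y
      by (simp add: dl dP B)
    have offL: "x = g y" if "y \<noteq> 0" "a * x + b * y + c = 0" for x y
    proof (rule ccontr)
      assume "x \<noteq> g y"
      then have "proj_class (\<Phi> x y) \<in> C" using gG[OF that(1)] curve_mem[OF hom Pnz] by (simp add: C_def G_def)
      moreover have "proj_class (\<Phi> x y) \<in> L" using l(2) line_mem[OF Pnz] dlP that(2) by simp
      ultimately show False using l(3) by blast
    qed
    show "L \<in> {L1, L2, L3}"
    proof (cases "a = 0")
      case False
      have key: "- (b * y + c) / a = \<alpha> * y + \<beta>" if "y \<noteq> 0" for y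
        using offL[OF that, of "- (b * y + c) / a"] gab[OF that] False by (simp add: field_simps)
      have "\<exists>y2::'a. y2 \<notin> {0, 1}"
      proof (rule ccontr)
        assume "\<not> ?thesis"
        then have "(UNIV::'a set) \<subseteq> {0,1}" by blast
        then have "card (UNIV::'a set) \<le> card {0::'a,1}" by (intro card_mono) auto
        also have "\<dots> \<le> 2" by (rule card_insert_le_m1) auto
        finally show False using cardU qd by simp
      qed
      then obtain y2 :: 'a where y2: "y2 \<noteq> 0" "y2 \<noteq> 1" by blast
      have k1: "- (b + c) = a * (\<alpha> + \<beta>)" using key[of 1] False by (simp add: field_simps)
      have k2: "- (b * y2 + c) = a * (\<alpha> * y2 + \<beta>)" using key[OF y2(1)] False by (simp add: field_simps)
      have "(b + a * \<alpha>) * (1 - y2) = (-(b*y2+c)) - (-(b+c)) - (a*(\<alpha>*y2+\<beta>) - a*(\<alpha>+\<beta>))"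
        by (simp add: algebra_simps)
      also have "\<dots> = 0" using k1 k2 by simp
      finally have "(b + a * \<alpha>) * (1 - y2) = 0" .
      then have "b + a * \<alpha> = 0" using y2(2) by simp
      then have bb: "b = - a * \<alpha>" by (simp add: algebra_simps eq_neg_iff_add_eq_0)
      have "c + a * \<beta> = a*(\<alpha>+\<beta>) - (-(b+c)) - (b + a*\<alpha>)" by (simp add: algebra_simps)
      also have "\<dots> = 0" using k1 \<open>b + a * \<alpha> = 0\<close> by simp
      finally have cc: "c = - a * \<beta>" by (simp add: algebra_simps eq_neg_iff_add_eq_0)
      have "L = L3" unfolding l(2) L3_def
        by (rule line_eq[OF False]) (simp add: dl dl3 bb cc algebra_simps)
      then show ?thesis by simp
    next
      case a0: True
      show ?thesis
      proof (cases "b = 0")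
        case True
        then have "c \<noteq> 0" using a0 l(1) dot_all_zero[of l] dl by auto
        have "L = L1" unfolding l(2) l1(2)
          by (rule line_eq[OF \<open>c \<noteq> 0\<close>]) (simp add: dl a0 True)
        then show ?thesis by simp
      next
        case bnz: False
        show ?thesis
        proof (cases "c = 0")
          case True
          have "L = L2" unfolding l(2) l2(2)
            by (rule line_eq[OF bnz]) (simp add: dl a0 True)
          then show ?thesis by simp
        next
          case False
          define y where "y = - c / b"
          have "y \<noteq> 0" using False bnz by (simp add: y_def)
          have "a * (g y + 1) + b * y + c = 0" using a0 bnz by (simp add: y_def)
          from offL[OF \<open>y \<noteq> 0\<close> this] show ?thesis by simp
        qed
      qed
    qed
  qed
  have "L1 \<noteq> L3" "L2 \<noteq> L3" using e1L by auto
  then have "card {L1, L2, L3} = 3" using assms(8) by simp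
  then show ?thesis using setEq by (simp add: a0_def C_def d_def)
qed

end
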